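(* The function $\lambda\mapsto\epsilon(\lambda)$, $\lambda\ge1$, is positive, continuous, convex and strictly decreasing; and for every $x\in\mathbb{S}$ the same holds for $\lambda\mapsto\epsilon(\lambda,x)$, $\lambda\ge1$.
   Context: Let $\pi,q$ be probability densities with respect to a $\sigma$-finite measure $\mu$ on $\mathbb{X}$ with $q>0$ wherever $\pi>0$; $\pi(dx)=\pi(x)\mu(dx)$, $q(dx)=q(x)\mu(dx)$, $\mathbb{S}=\{\pi>0\}$, $w=\pi/q$ on $\mathbb{S}$ and $0$ elsewhere. For integer $N\ge1$ and $z_1\in\mathbb{S}$, $\epsilon(N,z_1)=\int_{\mathbb{X}^{N-1}}\frac{w(z_1)}{\sum_{i=1}^Nw(z_i)}\prod_{n=2}^Nq(dz_n)$ (so $\epsilon(1,z_1)=1$) and $\epsilon(N)=\int_{\mathbb{S}}\epsilon(N,z)\pi(dz)$. For real $\lambda\ge1$ with $\beta=\lfloor\lambda\rfloor+1-\lambda$: $\epsilon(\lambda,x)=\beta\epsilon(\lfloor\lambda\rfloor,x)+(1-\beta)\epsilon(\lfloor\lambda\rfloor+1,x)$ and $\epsilon(\lambda)=\beta\epsilon(\lfloor\lambda\rfloor)+(1-\beta)\epsilon(\lfloor\lambda\rfloor+1)$. *)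

theory Defs
  imports "HOL-Probability.Probability"
begin

definition iw :: "('a \<Rightarrow> real) \<Rightarrow> ('a \<Rightarrow> real) \<Rightarrow> 'a \<Rightarrow> real" where
  "iw p q x = (if p x > 0 then p x / q x else 0)"

definition supp_p :: "'a measure \<Rightarrow> ('a \<Rightarrow> real) \<Rightarrow> 'a set" where
  "supp_p M p = {x \<in> space M. p x > 0}"

definition epsN :: "'a measure \<Rightarrow> ('a \<Rightarrow> real) \<Rightarrow> ('a \<Rightarrow> real) \<Rightarrow> nat \<Rightarrow> 'a \<Rightarrow> real" where
  "epsN M p q N z1 =
     (\<integral>z. iw p q z1 / (iw p q z1 + (\<Sum>i\<in>{2..N}. iw p q (z i)))
        \<partial>(PiM {2..N} (\<lambda>_. density M (\<lambda>x. ennreal (q x)))))"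

definition epsAvgN :: "'a measure \<Rightarrow> ('a \<Rightarrow> real) \<Rightarrow> ('a \<Rightarrow> real) \<Rightarrow> nat \<Rightarrow> real" where
  "epsAvgN M p q N =
     (LINT z : supp_p M p | density M (\<lambda>x. ennreal (p x)). epsN M p q N z)"

definition epsL :: "'a measure \<Rightarrow> ('a \<Rightarrow> real) \<Rightarrow> ('a \<Rightarrow> real) \<Rightarrow> real \<Rightarrow> 'a \<Rightarrow> real" where
  "epsL M p q l x =
     (let b = real_of_int \<lfloor>l\<rfloor> + 1 - l
      in b * epsN M p q (nat \<lfloor>l\<rfloor>) x + (1 - b) * epsN M p q (nat \<lfloor>l\<rfloor> + 1) x)"

definition epsAvgL :: "'a measure \<Rightarrow> ('a \<Rightarrow> real) \<Rightarrow> ('a \<Rightarrow> real) \<Rightarrow> real \<Rightarrow> real" where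
  "epsAvgL M p q l =
     (let b = real_of_int \<lfloor>l\<rfloor> + 1 - l
      in b * epsAvgN M p q (nat \<lfloor>l\<rfloor>) + (1 - b) * epsAvgN M p q (nat \<lfloor>l\<rfloor> + 1))"

end

theory Submission
  imports Defs
begin


definition interp :: "(nat \<Rightarrow> real) \<Rightarrow> real \<Rightarrow> real" where
  "interp a l = (let b = real_of_int \<lfloor>l\<rfloor> + 1 - l
      in b * a (nat \<lfloor>l\<rfloor>) + (1 - b) * a (nat \<lfloor>l\<rfloor> + 1))"

definition lin :: "(nat \<Rightarrow> real) \<Rightarrow> nat \<Rightarrow> real \<Rightarrow> real" where
  "lin a n l = a n + (a (Suc n) - a n) * (l - real n)"

lemma interp_eq:
  assumes "l \<ge> 1" shows "interp a l = lin a (nat \<lfloor>l\<rfloor>) l"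
proof -
  have r: "real (nat \<lfloor>l\<rfloor>) = real_of_int \<lfloor>l\<rfloor>" using assms by simp
  show ?thesis unfolding interp_def lin_def Let_def r
    by (simp add: algebra_simps)
qed

lemma lin_step: "lin a (Suc n) l - lin a n l
   = ((a (Suc (Suc n)) - a (Suc n)) - (a (Suc n) - a n)) * (l - real n - 1)"
  unfolding lin_def by (simp add: algebra_simps)

locale cseq =
  fixes a :: "nat \<Rightarrow> real"
  assumes conv: "\<And>n. n \<ge> 1 \<Longrightarrow> a (Suc n) - a n \<le> a (Suc (Suc n)) - a (Suc n)"
    and dec: "\<And>n. n \<ge> 1 \<Longrightarrow> a (Suc n) < a n"
    and pos: "\<And>n. n \<ge> 1 \<Longrightarrow> a n > 0"
begin

lemma lin_le_down:
  assumes "l \<ge> 1" "m = nat \<lfloor>l\<rfloor>" shows "j < m \<Longrightarrow> lin a (m - j) l \<le> lin a m l"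
proof (induction j)
  case 0 then show ?case by simp
next
  case (Suc j)
  have "lin a (Suc (m - Suc j)) l - lin a (m - Suc j) l \<ge> 0"
    unfolding lin_step
  proof (rule mult_nonneg_nonneg)
    show "0 \<le> a (Suc (Suc (m - Suc j))) - a (Suc (m - Suc j)) - (a (Suc (m - Suc j)) - a (m - Suc j))"
    proof -
      have "m - Suc j \<ge> 1" using Suc.prems by simp
      then show ?thesis using conv[of "m - Suc j"] by simp
    qed
    have "real (m - Suc j) + 1 \<le> real m" using Suc by simp
    also have "real m \<le> l" using assms by linarith
    finally show "0 \<le> l - real (m - Suc j) - 1" by simp
  qed
  moreover have "Suc (m - Suc j) = m - j" using Suc by simp
  ultimately show ?case using Suc by simp
qed

lemma lin_le_up:
  assumes "l \<ge> 1" "m = nat \<lfloor>l\<rfloor>" shows "lin a (m + j) l \<le> lin a m l"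
proof (induction j)
  case 0 then show ?case by simp
next
  case (Suc j)
  have "lin a (Suc (m + j)) l - lin a (m + j) l \<le> 0"
    unfolding lin_step
  proof (rule mult_nonneg_nonpos)
    have "m \<ge> 1" using assms by linarith
    then show "0 \<le> a (Suc (Suc (m + j))) - a (Suc (m + j)) - (a (Suc (m + j)) - a (m + j))"
      using conv[of "m + j"] by simp
    have "l < real m + 1" using assms by linarith
    then show "l - real (m + j) - 1 \<le> 0" by simp
  qed
  then show ?case using Suc by simp
qed

lemma lin_le_interp:
  assumes "l \<ge> 1" "n \<ge> 1" shows "lin a n l \<le> interp a l"
proof -
  define m where "m = nat \<lfloor>l\<rfloor>"
  have "m \<ge> 1" using assms unfolding m_def by linarith
  show ?thesis
  proof (cases "n \<le> m")
    case True
    show ?thesis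
    proof (cases "n = m")
      case True then show ?thesis using interp_eq[OF assms(1)] m_def by simp
    next
      case False
      have "lin a (m - (m - n)) l \<le> lin a m l"
        using lin_le_down[OF assms(1) m_def, of "m - n"] False True assms by simp
      then show ?thesis using True interp_eq[OF assms(1)] m_def by simp
    qed
  next
    case False
    have "lin a (m + (n - m)) l \<le> lin a m l" using lin_le_up[OF assms(1) m_def] .
    then show ?thesis using False interp_eq[OF assms(1)] m_def by simp
  qed
qed

lemma interp_pos: "l \<ge> 1 \<Longrightarrow> interp a l > 0"
proof -
  assume l: "l \<ge> 1"
  define b where "b = real_of_int \<lfloor>l\<rfloor> + 1 - l"
  have b: "0 < b" "b \<le> 1" unfolding b_def by linarith+
  have "nat \<lfloor>l\<rfloor> \<ge> 1" using l by linarith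
  then have "a (nat \<lfloor>l\<rfloor>) > 0" "a (nat \<lfloor>l\<rfloor> + 1) > 0" using pos by auto
  then have "b * a (nat \<lfloor>l\<rfloor>) + (1 - b) * a (nat \<lfloor>l\<rfloor> + 1) > 0"
    using b by (simp add: add_pos_nonneg)
  then show ?thesis unfolding interp_def b_def Let_def .
qed

lemma interp_convex: "convex_on {1..} (interp a)"
  unfolding convex_on_def
proof (intro conjI ballI allI impI)
  show "convex {1::real..}" by simp
  fix x y :: real and u v :: real
  assume xy: "x \<in> {1..}" "y \<in> {1..}" and uv: "0 \<le> u" "0 \<le> v" "u + v = 1"
  define z where "z = u *\<^sub>R x + v *\<^sub>R y"
  have z1: "z \<ge> 1"
  proof -
    have "u * x + v * y \<ge> u * 1 + v * 1" using xy uv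
      by (intro add_mono mult_left_mono) auto
    then show ?thesis using uv unfolding z_def by simp
  qed
  define m where "m = nat \<lfloor>z\<rfloor>"
  have m1: "m \<ge> 1" using z1 unfolding m_def by linarith
  have "interp a z = lin a m z" using interp_eq[OF z1] m_def by simp
  also have "\<dots> = u * lin a m x + v * lin a m y"
  proof -
    have v: "v = 1 - u" using uv by simp
    show ?thesis unfolding z_def lin_def v by (simp add: algebra_simps)
  qed
  also have "\<dots> \<le> u * interp a x + v * interp a y"
    using xy uv m1 by (intro add_mono mult_left_mono lin_le_interp) auto
  finally show "interp a (u *\<^sub>R x + v *\<^sub>R y) \<le> u * interp a x + v * interp a y"
    unfolding z_def .
qed

lemma interp_strict:
  assumes "1 \<le> x" "x < y" shows "interp a y < interp a x"
proof -
  define m where "m = nat \<lfloor>y\<rfloor>"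
  have m1: "m \<ge> 1" using assms unfolding m_def by linarith
  have "interp a y = lin a m y" using interp_eq[of y] assms m_def by simp
  also have "\<dots> = lin a m x + (a (Suc m) - a m) * (y - x)"
    unfolding lin_def by (simp add: algebra_simps)
  also have "\<dots> < lin a m x"
    using dec[OF m1] assms by (simp add: mult_neg_pos)
  also have "\<dots> \<le> interp a x" using lin_le_interp assms m1 by simp
  finally show ?thesis .
qed

lemma interp_cont: "continuous_on {1..} (interp a)"
proof -
  have c1: "continuous_on {1<..} (interp a)"
    apply (rule convex_on_continuous)
     apply simp
    apply (rule convex_on_subset[OF interp_convex]) by auto
  show ?thesis unfolding continuous_on_eq_continuous_within
  proof
    fix x :: real assume x: "x \<in> {1..}"
    show "continuous (at x within {1..}) (interp a)"
    proof (cases "x = 1")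
      case False
      then have "x \<in> {1<..}" using x by auto
      then have "isCont (interp a) x"
        by (meson c1 continuous_on_eq_continuous_at open_greaterThan)
      then show ?thesis by (rule continuous_at_imp_continuous_within)
    next
      case True
      have ev: "\<forall>\<^sub>F t in at x within {1..}. lin a 1 t = interp a t"
        unfolding eventually_at
      proof (intro exI[of _ 1] conjI ballI impI)
        fix t :: real assume t: "t \<in> {1..}" "t \<noteq> x \<and> dist t x < 1"
        then have "nat \<lfloor>t\<rfloor> = 1" using True by (auto simp: dist_real_def) linarith
        then show "lin a 1 t = interp a t" using interp_eq[of t] t by simp
      qed simp
      have "((lin a 1) \<longlongrightarrow> lin a 1 x) (at x within {1..})"
        unfolding lin_def by (intro tendsto_intros)
      moreover have "lin a 1 x = interp a x" using True interp_eq[of 1] by simp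
      ultimately have "((interp a) \<longlongrightarrow> interp a x) (at x within {1..})"
        using Lim_transform_eventually[OF _ ev] by simp
      then show ?thesis unfolding continuous_within .
    qed
  qed
qed

end


lemma integral_pos_helper:
  fixes f :: "'a \<Rightarrow> real"
  assumes "integrable M f" "\<And>x. x \<in> space M \<Longrightarrow> f x \<ge> 0" "A \<in> sets M"
    "emeasure M A \<noteq> 0" "\<And>x. x \<in> A \<Longrightarrow> f x > 0"
  shows "integral\<^sup>L M f > 0"
proof -
  have "integral\<^sup>L M f \<ge> 0" using assms(2) by (intro integral_nonneg_AE AE_I2) auto
  moreover have "integral\<^sup>L M f \<noteq> 0"
  proof
    assume "integral\<^sup>L M f = 0"
    then have "AE x in M. f x = 0"
      using integral_nonneg_eq_0_iff_AE[OF assms(1)] assms(2) by auto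
    then have "AE x in M. x \<notin> A"
      by eventually_elim (use assms(5) in force)
    then have "emeasure M A = 0"
      using AE_iff_measurable[OF assms(3), of "\<lambda>x. x \<notin> A"] sets.sets_into_space[OF assms(3)]
      by auto
    then show False using assms(4) by simp
  qed
  ultimately show ?thesis by simp
qed

lemma psi_mono:
  fixes c s s' t :: real
  assumes "c > 0" "0 \<le> s" "s \<le> s'" "0 \<le> t"
  shows "c/(c+s') - c/(c+s'+t) \<le> c/(c+s) - c/(c+s+t)"
proof -
  have e: "c/(c+r) - c/(c+r+t) = c*t/((c+r)*(c+r+t))" if "r \<ge> 0" for r
    using that assms by (simp add: field_simps)
  have "c*t/((c+s')*(c+s'+t)) \<le> c*t/((c+s)*(c+s+t))"
    using assms by (intro divide_left_mono mult_mono mult_pos_pos) auto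
  then show ?thesis using e[of s] e[of s'] assms by simp
qed

lemma psi_strict:
  fixes c s t :: real
  assumes "c > 0" "0 \<le> s" "0 < t"
  shows "c/(c+s+t) < c/(c+s)"
  using assms by (intro divide_strict_left_mono) auto

locale dens =
  fixes M :: "'a measure" and p q :: "'a \<Rightarrow> real"
  assumes sf: "sigma_finite_measure M"
    and pm[measurable]: "p \<in> borel_measurable M" and qm[measurable]: "q \<in> borel_measurable M"
    and p0: "\<And>x. x \<in> space M \<Longrightarrow> p x \<ge> 0"
    and q0: "\<And>x. x \<in> space M \<Longrightarrow> q x \<ge> 0"
    and p1: "(\<integral>\<^sup>+ x. ennreal (p x) \<partial>M) = 1"
    and q1: "(\<integral>\<^sup>+ x. ennreal (q x) \<partial>M) = 1"
    and pq: "\<And>x. x \<in> space M \<Longrightarrow> p x > 0 \<Longrightarrow> q x > 0"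
begin

abbreviation "Q \<equiv> density M (\<lambda>x. ennreal (q x))"
abbreviation "P \<equiv> density M (\<lambda>x. ennreal (p x))"
abbreviation "w \<equiv> iw p q"
abbreviation "S \<equiv> supp_p M p"

lemma w_meas[measurable]: "iw p q \<in> borel_measurable M"
  unfolding iw_def by measurable

lemma w_measQ[measurable]: "iw p q \<in> borel_measurable Q"
  using w_meas by (simp add: measurable_def)

lemma S_sets[measurable]: "S \<in> sets M"
  unfolding supp_p_def by measurable

lemma w_nonneg: "x \<in> space M \<Longrightarrow> w x \<ge> 0"
  unfolding iw_def using pq[of x] by auto

lemma w_pos: "x \<in> S \<Longrightarrow> w x > 0"
  unfolding iw_def supp_p_def using pq[of x] by auto

lemma Q_prob: "prob_space Q"
proof (rule prob_spaceI)
  have "emeasure Q (space Q) = (\<integral>\<^sup>+ x. ennreal (q x) * indicator (space M) x \<partial>M)"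
    by (simp add: emeasure_density)
  also have "\<dots> = (\<integral>\<^sup>+ x. ennreal (q x) \<partial>M)"
    by (intro nn_integral_cong) simp
  finally show "emeasure Q (space Q) = 1" using q1 by simp
qed

lemma P_prob: "prob_space P"
proof (rule prob_spaceI)
  have "emeasure P (space P) = (\<integral>\<^sup>+ x. ennreal (p x) * indicator (space M) x \<partial>M)"
    by (simp add: emeasure_density)
  also have "\<dots> = (\<integral>\<^sup>+ x. ennreal (p x) \<partial>M)"
    by (intro nn_integral_cong) simp
  finally show "emeasure P (space P) = 1" using p1 by simp
qed

lemma P_S: "emeasure P S \<noteq> 0"
proof -
  have "emeasure P S = (\<integral>\<^sup>+ x. ennreal (p x) * indicator S x \<partial>M)"
    by (simp add: emeasure_density)
  also have "\<dots> = (\<integral>\<^sup>+ x. ennreal (p x) \<partial>M)"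
    by (intro nn_integral_cong) (auto simp: supp_p_def indicator_def ennreal_neg)
  finally show ?thesis using p1 by simp
qed

lemma Q_S: "emeasure Q S \<noteq> 0"
proof
  assume "emeasure Q S = 0"
  then have "(\<integral>\<^sup>+ x. ennreal (q x) * indicator S x \<partial>M) = 0"
    by (simp add: emeasure_density)
  then have "AE x in M. ennreal (q x) * indicator S x = 0"
    by (subst (asm) nn_integral_0_iff_AE) auto
  then have ae: "AE x in M. ennreal (p x) = 0" using AE_space
  proof eventually_elim
    case (elim x)
    show ?case
    proof (cases "p x > 0")
      case True
      then have "x \<in> S" "q x > 0" using elim pq by (auto simp: supp_p_def)
      then show ?thesis using elim by simp
    qed (simp add: ennreal_neg)
  qed
  have "(\<integral>\<^sup>+ x. ennreal (p x) \<partial>M) = 0"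
    using ae by (simp add: nn_integral_0_iff_AE)
  then show False using p1 by simp
qed

lemma PiQ_prob: "prob_space (PiM I (\<lambda>_. Q))"
  by (intro prob_space_PiM Q_prob)

lemma sum_meas[measurable]: "(\<lambda>z. \<Sum>i\<in>I. w (z i)) \<in> borel_measurable (PiM I (\<lambda>_. Q))"
  by measurable

lemma sum_nonneg_space: "z \<in> space (PiM I (\<lambda>_. Q)) \<Longrightarrow> (\<Sum>i\<in>I. w (z i)) \<ge> 0"
  by (intro sum_nonneg w_nonneg) (auto simp: space_PiM)

end


lemma (in prob_space) bdd_integrable:
  fixes f :: "'a \<Rightarrow> real"
  assumes "f \<in> borel_measurable M" "\<And>x. x \<in> space M \<Longrightarrow> \<bar>f x\<bar> \<le> B"
  shows "integrable M f"
  by (rule integrable_const_bound[where B=B]) (use assms in \<open>auto intro!: AE_I2\<close>)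

lemma (in prob_space) bdd_integral:
  fixes f :: "'a \<Rightarrow> real"
  assumes "f \<in> borel_measurable M" "\<And>x. x \<in> space M \<Longrightarrow> \<bar>f x\<bar> \<le> B"
  shows "\<bar>integral\<^sup>L M f\<bar> \<le> B"
proof -
  have i: "integrable M f" by (rule bdd_integrable[OF assms])
  have bnd: "-B \<le> f x" "f x \<le> B" if "x \<in> space M" for x
    using assms(2)[OF that] by linarith+
  have "integral\<^sup>L M f \<le> B"
    by (intro integral_le_const[OF i] AE_I2 bnd)
  moreover have "- B \<le> integral\<^sup>L M f"
    by (intro integral_ge_const[OF i] AE_I2 bnd)
  ultimately show ?thesis by simp
qed

definition psi :: "real \<Rightarrow> real \<Rightarrow> real" where
  "psi c s = c / (c + max 0 s)"

lemma psi_meas[measurable]: "psi c \<in> borel_measurable borel"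
  unfolding psi_def by measurable

lemma psi_bdd: "c > 0 \<Longrightarrow> \<bar>psi c s\<bar> \<le> 1"
  unfolding psi_def by (auto simp: field_simps)

context dens
begin

definition T :: "(real \<Rightarrow> real) \<Rightarrow> real \<Rightarrow> real" where
  "T g s = (\<integral>y. g (s + w y) \<partial>Q)"

definition EE :: "nat \<Rightarrow> (real \<Rightarrow> real) \<Rightarrow> real" where
  "EE N g = (\<integral>z. g (\<Sum>i\<in>{2..N}. w (z i)) \<partial>PiM {2..N} (\<lambda>_. Q))"

lemma T_meas[measurable]:
  assumes [measurable]: "g \<in> borel_measurable borel"
  shows "T g \<in> borel_measurable borel"
proof -
  interpret Q: prob_space Q by (rule Q_prob)
  show ?thesis unfolding T_def
    by (rule Q.borel_measurable_lebesgue_integral) measurable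
qed

lemma T_bdd:
  fixes g :: "real \<Rightarrow> real"
  assumes [measurable]: "g \<in> borel_measurable borel" and B: "\<And>s. \<bar>g s\<bar> \<le> B"
  shows "\<bar>T g s\<bar> \<le> B"
proof -
  interpret Q: prob_space Q by (rule Q_prob)
  show ?thesis unfolding T_def by (rule Q.bdd_integral) (auto simp: B)
qed

lemma insert_step:
  fixes g :: "real \<Rightarrow> real"
  assumes g[measurable]: "g \<in> borel_measurable borel" and B: "\<And>s. \<bar>g s\<bar> \<le> B"
    and I: "finite I" "i \<notin> I"
  shows "(\<integral>z. g (\<Sum>j\<in>insert i I. w (z j)) \<partial>PiM (insert i I) (\<lambda>_. Q))
       = (\<integral>z. (\<integral>y. g ((\<Sum>j\<in>I. w (z j)) + w y) \<partial>Q) \<partial>PiM I (\<lambda>_. Q))"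
proof -
  interpret Q: prob_space Q by (rule Q_prob)
  interpret PQ: product_sigma_finite "\<lambda>_. Q"
    by (simp add: product_sigma_finite_def Q.sigma_finite_measure_axioms)
  interpret PI: prob_space "PiM (insert i I) (\<lambda>_. Q)" by (rule PiQ_prob)
  have int: "integrable (PiM (insert i I) (\<lambda>_. Q)) (\<lambda>z. g (\<Sum>j\<in>insert i I. w (z j)))"
    by (rule PI.bdd_integrable[where B=B]) (auto simp: B)
  have e: "(\<Sum>j\<in>insert i I. w ((z(i := y)) j)) = (\<Sum>j\<in>I. w (z j)) + w y" for z y
  proof -
    have "(\<Sum>j\<in>I. w ((z(i := y)) j)) = (\<Sum>j\<in>I. w (z j))"
      using I by (intro sum.cong) auto
    then show ?thesis using I by simp
  qed
  show ?thesis
    unfolding PQ.product_integral_insert[OF I int] e ..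
qed

lemma EE_step:
  fixes g :: "real \<Rightarrow> real"
  assumes g[measurable]: "g \<in> borel_measurable borel" and B: "\<And>s. \<bar>g s\<bar> \<le> B" and N: "N \<ge> 1"
  shows "EE (Suc N) g = EE N (T g)"
proof -
  have i: "{2..Suc N} = insert (Suc N) {2..N}" using N by (intro atLeastAtMostSuc_conv) simp
  show ?thesis unfolding EE_def T_def i
    by (rule insert_step[OF g B]) auto
qed

lemma EE_diff:
  fixes g h :: "real \<Rightarrow> real"
  assumes [measurable]: "g \<in> borel_measurable borel" "h \<in> borel_measurable borel"
    and "\<And>s. \<bar>g s\<bar> \<le> B" "\<And>s. \<bar>h s\<bar> \<le> B"
  shows "EE N g - EE N h = EE N (\<lambda>s. g s - h s)"
proof -
  interpret PI: prob_space "PiM {2..N} (\<lambda>_. Q)" by (rule PiQ_prob)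
  have i1: "integrable (PiM {2..N} (\<lambda>_. Q)) (\<lambda>z. g (\<Sum>i\<in>{2..N}. w (z i)))"
    by (rule PI.bdd_integrable[where B=B]) (auto simp: assms)
  have i2: "integrable (PiM {2..N} (\<lambda>_. Q)) (\<lambda>z. h (\<Sum>i\<in>{2..N}. w (z i)))"
    by (rule PI.bdd_integrable[where B=B]) (auto simp: assms)
  show ?thesis unfolding EE_def using Bochner_Integration.integral_diff[OF i1 i2] by simp
qed

lemma EE_mono:
  fixes g h :: "real \<Rightarrow> real"
  assumes [measurable]: "g \<in> borel_measurable borel" "h \<in> borel_measurable borel"
    and "\<And>s. \<bar>g s\<bar> \<le> B" "\<And>s. \<bar>h s\<bar> \<le> B" and le: "\<And>s. s \<ge> 0 \<Longrightarrow> g s \<le> h s"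
  shows "EE N g \<le> EE N h"
proof -
  interpret PI: prob_space "PiM {2..N} (\<lambda>_. Q)" by (rule PiQ_prob)
  show ?thesis unfolding EE_def
    by (rule integral_mono; (rule PI.bdd_integrable[where B=B])?)
       (auto simp: assms intro!: le sum_nonneg_space)
qed

lemma EE_pos:
  fixes g :: "real \<Rightarrow> real"
  assumes [measurable]: "g \<in> borel_measurable borel"
    and "\<And>s. \<bar>g s\<bar> \<le> B" and gp: "\<And>s. s \<ge> 0 \<Longrightarrow> g s > 0"
  shows "EE N g > 0"
proof -
  interpret PI: prob_space "PiM {2..N} (\<lambda>_. Q)" by (rule PiQ_prob)
  show ?thesis unfolding EE_def
    by (rule integral_pos_helper[where A="space (PiM {2..N} (\<lambda>_. Q))"])
       (auto intro!: PI.bdd_integrable[where B=B] less_imp_le[OF gp] gp sum_nonneg_space simp: assms PI.emeasure_space_1)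
qed

end


context dens
begin

definition Df :: "real \<Rightarrow> real \<Rightarrow> real" where
  "Df c s = psi c s - T (psi c) s"

lemma Df_meas[measurable]: "Df c \<in> borel_measurable borel"
  unfolding Df_def by measurable

lemma Tpsi_bdd: "c > 0 \<Longrightarrow> \<bar>T (psi c) s\<bar> \<le> 1"
  by (rule T_bdd) (auto intro: psi_bdd)

lemma Df_bdd: "c > 0 \<Longrightarrow> \<bar>Df c s\<bar> \<le> 2"
  unfolding Df_def using psi_bdd[of c s] Tpsi_bdd[of c s] by linarith

lemma psi_nonneg_arg: "s \<ge> 0 \<Longrightarrow> psi c s = c / (c + s)"
  unfolding psi_def by simp

lemma Df_eq:
  assumes c: "c > 0" and s: "s \<ge> 0"
  shows "Df c s = (\<integral>y. psi c s - psi c (s + w y) \<partial>Q)"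
proof -
  interpret Q: prob_space Q by (rule Q_prob)
  have sp: "measure Q (space M) = 1" using Q.prob_space by simp
  have i: "integrable Q (\<lambda>y. psi c (s + w y))"
    by (rule Q.bdd_integrable[where B=1]) (auto intro: psi_bdd c)
  have "(\<integral>y. psi c s - psi c (s + w y) \<partial>Q) = psi c s - T (psi c) s"
    unfolding T_def by (subst Bochner_Integration.integral_diff[OF _ i]) (auto simp: sp)
  then show ?thesis unfolding Df_def by simp
qed

lemma psi_diff_nonneg:
  assumes "c > 0" "s \<ge> 0" "t \<ge> 0"
  shows "psi c s - psi c (s + t) \<ge> 0"
proof -
  have "c/(c+s+t) \<le> c/(c+s)" using assms by (intro divide_left_mono) auto
  then show ?thesis using assms by (simp add: psi_nonneg_arg add.assoc)
qed

lemma Df_pos: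
  assumes c: "c > 0" and s: "s \<ge> 0"
  shows "Df c s > 0"
proof -
  interpret Q: prob_space Q by (rule Q_prob)
  have sp: "measure Q (space M) = 1" using Q.prob_space by simp
  have "(\<integral>y. psi c s - psi c (s + w y) \<partial>Q) > 0"
  proof (rule integral_pos_helper[where A=S])
    show "integrable Q (\<lambda>y. psi c s - psi c (s + w y))"
      by (rule Q.bdd_integrable[where B=2]) (auto intro!: abs_triangle_ineq4[THEN order_trans]
          simp: psi_bdd[OF c, of s] psi_bdd[OF c, of "s + _"]
          intro: order_trans[OF add_mono[OF psi_bdd[OF c] psi_bdd[OF c]]])
    show "y \<in> space Q \<Longrightarrow> 0 \<le> psi c s - psi c (s + w y)" for y
      using psi_diff_nonneg[OF c s w_nonneg[of y]] by simp
    show "S \<in> sets Q" by simp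
    show "emeasure Q S \<noteq> 0" by (rule Q_S)
    show "y \<in> S \<Longrightarrow> 0 < psi c s - psi c (s + w y)" for y
      using psi_strict[OF c s w_pos[of y]] s w_pos[of y] by (simp add: psi_nonneg_arg add.assoc)
  qed
  then show ?thesis using Df_eq[OF c s] by simp
qed

lemma Df_anti:
  assumes c: "c > 0" and s: "0 \<le> s" "s \<le> s'"
  shows "Df c s' \<le> Df c s"
proof -
  interpret Q: prob_space Q by (rule Q_prob)
  have sp: "measure Q (space M) = 1" using Q.prob_space by simp
  have b: "\<bar>psi c a - psi c b\<bar> \<le> 2" for a b
    using psi_bdd[OF c, of a] psi_bdd[OF c, of b] by linarith
  have "(\<integral>y. psi c s' - psi c (s' + w y) \<partial>Q) \<le> (\<integral>y. psi c s - psi c (s + w y) \<partial>Q)"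
  proof (rule integral_mono)
    show "integrable Q (\<lambda>y. psi c s' - psi c (s' + w y))"
      by (rule Q.bdd_integrable[where B=2]) (auto simp: b)
    show "integrable Q (\<lambda>y. psi c s - psi c (s + w y))"
      by (rule Q.bdd_integrable[where B=2]) (auto simp: b)
    fix y assume y: "y \<in> space Q"
    have wy: "w y \<ge> 0" using w_nonneg y by simp
    show "psi c s' - psi c (s' + w y) \<le> psi c s - psi c (s + w y)"
      using psi_mono[OF c s wy] s wy by (simp add: psi_nonneg_arg add.assoc)
  qed
  then show ?thesis using Df_eq[OF c] s by simp
qed

lemma TDf_le:
  assumes c: "c > 0" and s: "0 \<le> s"
  shows "T (Df c) s \<le> Df c s"
proof -
  interpret Q: prob_space Q by (rule Q_prob)
  have sp: "measure Q (space M) = 1" using Q.prob_space by simp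
  have "T (Df c) s \<le> (\<integral>y. Df c s \<partial>Q)"
    unfolding T_def
  proof (rule integral_mono)
    show "integrable Q (\<lambda>y. Df c (s + w y))"
      by (rule Q.bdd_integrable[where B=2]) (auto intro: Df_bdd c)
    show "integrable Q (\<lambda>y. Df c s)" by simp
    fix y assume y: "y \<in> space Q"
    have wy: "w y \<ge> 0" using w_nonneg y by simp
    show "Df c (s + w y) \<le> Df c s" using Df_anti[OF c s] wy by simp
  qed
  then show ?thesis by (simp add: sp)
qed

lemma epsN_EE:
  assumes x: "x \<in> S"
  shows "epsN M p q N x = EE N (psi (w x))"
  unfolding epsN_def EE_def psi_def
  by (rule Bochner_Integration.integral_cong[OF refl]) (auto dest: sum_nonneg_space)

lemma eps_diff:
  assumes x: "x \<in> S" and N: "N \<ge> 1"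
  shows "epsN M p q N x - epsN M p q (Suc N) x = EE N (Df (w x))"
proof -
  have c: "w x > 0" by (rule w_pos[OF x])
  have "epsN M p q N x - epsN M p q (Suc N) x = EE N (psi (w x)) - EE N (T (psi (w x)))"
    unfolding epsN_EE[OF x] using EE_step[OF psi_meas psi_bdd[OF c] N] by simp
  also have "\<dots> = EE N (Df (w x))"
    unfolding Df_def by (rule EE_diff[where B=1]) (auto intro: psi_bdd Tpsi_bdd c)
  finally show ?thesis .
qed

lemma eps_cseq:
  assumes x: "x \<in> S"
  shows "cseq (\<lambda>n. epsN M p q n x)"
proof
  have c: "w x > 0" by (rule w_pos[OF x])
  fix n :: nat assume n: "n \<ge> 1"
  show "epsN M p q n x > 0"
    unfolding epsN_EE[OF x]
    by (rule EE_pos[where B=1]) (use c in \<open>auto intro: psi_bdd simp: psi_nonneg_arg\<close>)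
  have d1: "EE n (Df (w x)) > 0"
    by (rule EE_pos[where B=2]) (auto intro: Df_bdd Df_pos c)
  then show "epsN M p q (Suc n) x < epsN M p q n x"
    using eps_diff[OF x n] by simp
  have "EE (Suc n) (Df (w x)) = EE n (T (Df (w x)))"
    by (rule EE_step[OF Df_meas Df_bdd[OF c] n])
  also have "\<dots> \<le> EE n (Df (w x))"
    by (rule EE_mono[where B=2]) (auto intro: Df_bdd T_bdd[OF Df_meas Df_bdd] TDf_le c)
  finally have "epsN M p q (Suc n) x - epsN M p q (Suc (Suc n)) x \<le> epsN M p q n x - epsN M p q (Suc n) x"
    using eps_diff[OF x n] eps_diff[OF x, of "Suc n"] by simp
  then show "epsN M p q (Suc n) x - epsN M p q n x \<le> epsN M p q (Suc (Suc n)) x - epsN M p q (Suc n) x"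
    by simp
qed

end


context dens
begin

lemma EE_bdd:
  fixes g :: "real \<Rightarrow> real"
  assumes [measurable]: "g \<in> borel_measurable borel" and B: "\<And>s. \<bar>g s\<bar> \<le> B"
  shows "\<bar>EE N g\<bar> \<le> B"
proof -
  interpret PI: prob_space "PiM {2..N} (\<lambda>_. Q)" by (rule PiQ_prob)
  show ?thesis unfolding EE_def by (rule PI.bdd_integral) (auto simp: B)
qed

lemma epsN_meas[measurable]: "(\<lambda>z. epsN M p q N z) \<in> borel_measurable M"
proof -
  interpret PI: prob_space "PiM {2..N} (\<lambda>_. Q)" by (rule PiQ_prob)
  show ?thesis unfolding epsN_def
    by (rule PI.borel_measurable_lebesgue_integral) measurable
qed

definition G :: "nat \<Rightarrow> 'a \<Rightarrow> real" where
  "G N z = indicator S z * epsN M p q N z"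

lemma G_meas[measurable]: "G N \<in> borel_measurable P"
  unfolding G_def by (simp add: measurable_def[symmetric]) measurable

lemma G_bdd: "\<bar>G N z\<bar> \<le> 1"
proof (cases "z \<in> S")
  case True
  have c: "w z > 0" by (rule w_pos[OF True])
  show ?thesis unfolding G_def using True epsN_EE[OF True, of N]
      EE_bdd[OF psi_meas psi_bdd[OF c], of N] by simp
qed (simp add: G_def)

lemma G_int: "integrable P (G N)"
proof -
  interpret P: prob_space P by (rule P_prob)
  show ?thesis by (rule P.bdd_integrable[where B=1]) (auto simp: G_bdd)
qed

lemma avg_G: "epsAvgN M p q N = integral\<^sup>L P (G N)"
  unfolding epsAvgN_def set_lebesgue_integral_def G_def by simp

lemma avg_cseq: "cseq (epsAvgN M p q)"
proof
  fix n :: nat assume n: "n \<ge> 1"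
  show "epsAvgN M p q n > 0"
    unfolding avg_G
  proof (rule integral_pos_helper[where A=S])
    show "integrable P (G n)" by (rule G_int)
    show "z \<in> space P \<Longrightarrow> 0 \<le> G n z" for z
      using cseq.pos[OF eps_cseq n, of z] by (auto simp: G_def indicator_def)
    show "S \<in> sets P" by simp
    show "emeasure P S \<noteq> 0" by (rule P_S)
    show "z \<in> S \<Longrightarrow> 0 < G n z" for z
      using cseq.pos[OF eps_cseq n, of z] by (auto simp: G_def)
  qed
  have "epsAvgN M p q n - epsAvgN M p q (Suc n) = (\<integral>z. G n z - G (Suc n) z \<partial>P)"
    unfolding avg_G by (rule Bochner_Integration.integral_diff[OF G_int G_int, symmetric])
  also have "\<dots> > 0"
  proof (rule integral_pos_helper[where A=S])
    show "integrable P (\<lambda>z. G n z - G (Suc n) z)" by (intro Bochner_Integration.integrable_diff G_int)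
    show "z \<in> space P \<Longrightarrow> 0 \<le> G n z - G (Suc n) z" for z
      using cseq.dec[OF eps_cseq n, of z] by (auto simp: G_def indicator_def)
    show "S \<in> sets P" by simp
    show "emeasure P S \<noteq> 0" by (rule P_S)
    show "z \<in> S \<Longrightarrow> 0 < G n z - G (Suc n) z" for z
      using cseq.dec[OF eps_cseq n, of z] by (auto simp: G_def)
  qed
  finally show "epsAvgN M p q (Suc n) < epsAvgN M p q n" by simp
  have "epsAvgN M p q (Suc n) - epsAvgN M p q n = (\<integral>z. G (Suc n) z - G n z \<partial>P)"
    unfolding avg_G by (rule Bochner_Integration.integral_diff[OF G_int G_int, symmetric])
  also have "\<dots> \<le> (\<integral>z. G (Suc (Suc n)) z - G (Suc n) z \<partial>P)"
  proof (rule integral_mono)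
    show "integrable P (\<lambda>z. G (Suc n) z - G n z)" by (intro Bochner_Integration.integrable_diff G_int)
    show "integrable P (\<lambda>z. G (Suc (Suc n)) z - G (Suc n) z)" by (intro Bochner_Integration.integrable_diff G_int)
    show "G (Suc n) z - G n z \<le> G (Suc (Suc n)) z - G (Suc n) z" for z
      using cseq.conv[OF eps_cseq n, of z] by (auto simp: G_def indicator_def)
  qed
  also have "\<dots> = epsAvgN M p q (Suc (Suc n)) - epsAvgN M p q (Suc n)"
    unfolding avg_G by (rule Bochner_Integration.integral_diff[OF G_int G_int])
  finally show "epsAvgN M p q (Suc n) - epsAvgN M p q n \<le> epsAvgN M p q (Suc (Suc n)) - epsAvgN M p q (Suc n)" .
qed

end

lemma epsL_interp: "epsL M p q l x = interp (\<lambda>n. epsN M p q n x) l"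
  unfolding epsL_def interp_def by simp

lemma epsAvgL_interp: "epsAvgL M p q = interp (epsAvgN M p q)"
  unfolding epsAvgL_def interp_def by (rule ext) simp

theorem theorem6p12:
  fixes M :: "'a measure" and p q :: "'a \<Rightarrow> real"
  assumes "sigma_finite_measure M"
    and "p \<in> borel_measurable M" and "q \<in> borel_measurable M"
    and "\<And>x. x \<in> space M \<Longrightarrow> p x \<ge> 0"
    and "\<And>x. x \<in> space M \<Longrightarrow> q x \<ge> 0"
    and "(\<integral>\<^sup>+ x. ennreal (p x) \<partial>M) = 1"
    and "(\<integral>\<^sup>+ x. ennreal (q x) \<partial>M) = 1"
    and "\<And>x. x \<in> space M \<Longrightarrow> p x > 0 \<Longrightarrow> q x > 0"
  shows "(\<forall>l\<ge>1. epsAvgL M p q l > 0)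
       \<and> continuous_on {1..} (epsAvgL M p q)
       \<and> convex_on {1..} (epsAvgL M p q)
       \<and> (\<forall>a b. 1 \<le> a \<longrightarrow> a < b \<longrightarrow> epsAvgL M p q b < epsAvgL M p q a)
       \<and> (\<forall>x\<in>supp_p M p.
            (\<forall>l\<ge>1. epsL M p q l x > 0)
          \<and> continuous_on {1..} (\<lambda>l. epsL M p q l x)
          \<and> convex_on {1..} (\<lambda>l. epsL M p q l x)
          \<and> (\<forall>a b. 1 \<le> a \<longrightarrow> a < b \<longrightarrow> epsL M p q b x < epsL M p q a x))"
proof -
  interpret dens M p q unfolding dens_def using assms by blast
  have A: "cseq (epsAvgN M p q)" by (rule avg_cseq)
  have B: "cseq (\<lambda>n. epsN M p q n x)" if "x \<in> supp_p M p" for x by (rule eps_cseq[OF that])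
  show ?thesis
    unfolding epsAvgL_interp epsL_interp
    using cseq.interp_pos[OF A] cseq.interp_cont[OF A] cseq.interp_convex[OF A]
      cseq.interp_strict[OF A] cseq.interp_pos[OF B] cseq.interp_cont[OF B]
      cseq.interp_convex[OF B] cseq.interp_strict[OF B]
    by blast
qed


end
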